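(* For every $\alpha\in\mathbb R$, the equation $2x-1=\tanh(\alpha x^2)$ has a unique solution $x\in(0,1)$. *)

theory Defs
  imports "HOL-Analysis.Analysis"
begin

end

theory Submission
  imports Defs
begin

lemma ln_lt_half: "0 < (t::real) \<Longrightarrow> ln t < t / 2"
proof -
  assume t: "0 < t"
  define s where "s = sqrt t"
  have s: "0 < s" "t = s^2" using t by (auto simp: s_def)
  have lt: "ln t = 2 * ln s" using s by (simp add: ln_realpow)
  show ?thesis
  proof (cases "s = 1")
    case True then show ?thesis using s lt by simp
  next
    case False
    have "ln s \<le> s - 1" using s by (simp add: ln_le_minus_one)
    moreover have "ln s \<noteq> s - 1" using ln_eq_minus_one[of s] s False by auto
    ultimately have "ln s < s - 1" by simp
    moreover have "0 \<le> (s - 2)^2" by simp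
    ultimately show ?thesis using lt s by (simp add: power2_eq_square algebra_simps)
  qed
qed

definition psi :: "real \<Rightarrow> real" where
  "psi x = artanh (2*x-1) / x^2"

lemma psi_deriv:
  fixes x :: real
  assumes "0 < x" "x < 1"
  shows "(psi has_field_derivative
     ((2 / (1 - (2*x-1)^2) * x^2 - artanh (2*x-1) * (2*x)) / (x^2)^2)) (at x)"
proof -
  have "(2*x-1)^2 < 1" using assms by (simp add: abs_square_less_1)
  hence a: "(artanh has_field_derivative (1 / (1 - (2*x-1) ^ 2))) (at (2*x-1))"
    using assms by (intro artanh_real_has_field_derivative) auto
  have b: "((\<lambda>x. 2*x-1) has_field_derivative 2) (at x)"
    by (auto intro!: derivative_eq_intros)
  have d: "((\<lambda>x. artanh (2*x-1)) has_field_derivative (2 / (1 - (2*x-1)^2))) (at x)"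
    using DERIV_chain2[OF a b] by simp
  show ?thesis unfolding psi_def[abs_def] using assms
    by (auto intro!: derivative_eq_intros d)
qed

lemma psi_deriv_pos:
  fixes x :: real
  assumes "0 < x" "x < 1"
  shows "0 < (2 / (1 - (2*x-1)^2) * x^2 - artanh (2*x-1) * (2*x)) / (x^2)^2"
proof -
  define t where "t = x / (1 - x)"
  have tp: "0 < t" using assms unfolding t_def by (simp add: divide_pos_pos)
  have e1: "1 - (2*x-1)^2 = 4*x*(1-x)" by (simp add: power2_eq_square algebra_simps)
  have e2: "2 * artanh (2*x-1) = ln t"
    unfolding artanh_def t_def using assms
    by (simp add: divide_simps)
  have "ln t < t/2" using tp by (rule ln_lt_half)
  moreover have "t/2 < 1 / (2*(1-x))"
  proof -
    have "t/2 = x / (2*(1-x))" unfolding t_def by simp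
    also have "\<dots> < 1 / (2*(1-x))" using assms by (intro divide_strict_right_mono) auto
    finally show ?thesis .
  qed
  ultimately have h: "2 * artanh (2*x-1) < 1 / (2*(1-x))" using e2 by simp
  have "(2 * artanh (2*x-1)) * x < 1 / (2*(1-x)) * x"
    using mult_strict_right_mono[OF h] assms by simp
  hence "artanh (2*x-1) * (2*x) < x / (2*(1-x))" by (simp add: mult_ac)
  moreover have "2 / (1 - (2*x-1)^2) * x^2 = x / (2*(1-x))"
    using assms unfolding e1 by (simp add: field_simps power2_eq_square)
  ultimately show ?thesis using assms by simp
qed

lemma psi_mono:
  assumes "0 < a" "a < b" "b < 1"
  shows "psi a < psi b"
  apply (rule DERIV_pos_imp_increasing[OF assms(2)])
  using psi_deriv psi_deriv_pos assms by (meson le_less_trans less_le_trans)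

lemma sol_psi:
  assumes "0 < x" "2 * x - 1 = tanh (\<alpha> * x ^ 2)"
  shows "psi x = \<alpha>"
proof -
  have "artanh (2*x-1) = \<alpha> * x^2" using assms(2) artanh_tanh_real by simp
  then show ?thesis using assms(1) by (simp add: psi_def)
qed

theorem lemma33:
  fixes \<alpha> :: real
  shows "\<exists>!x::real. 0 < x \<and> x < 1 \<and> 2 * x - 1 = tanh (\<alpha> * x ^ 2)"
proof -
  define f where "f x = 2 * x - 1 - tanh (\<alpha> * x ^ 2)" for x :: real
  have c: "continuous_on {0..1} f" unfolding f_def by (intro continuous_intros) (simp add: cosh_real_pos)
  have f0: "f 0 < 0" by (simp add: f_def)
  have f1: "f 1 > 0" using tanh_real_bounds[of \<alpha>] by (simp add: f_def)
  obtain x where x: "0 \<le> x" "x \<le> 1" "f x = 0"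
    using IVT'[of f 0 0 1] c f0 f1 by fastforce
  have "x \<noteq> 0" "x \<noteq> 1" using x f0 f1 by auto
  hence ex: "0 < x \<and> x < 1 \<and> 2 * x - 1 = tanh (\<alpha> * x ^ 2)" using x by (simp add: f_def)
  show ?thesis
  proof (rule ex1I[of _ x])
    show "0 < x \<and> x < 1 \<and> 2 * x - 1 = tanh (\<alpha> * x ^ 2)" by (rule ex)
  next
    fix y assume y: "0 < y \<and> y < 1 \<and> 2 * y - 1 = tanh (\<alpha> * y ^ 2)"
    have "psi y = psi x" using sol_psi[of y] sol_psi[of x] y ex by auto
    then show "y = x" using psi_mono[of y x] psi_mono[of x y] y ex
      by (metis linorder_neqE_linordered_idom less_irrefl)
  qed
qed

end
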